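(* Let $n\ge3$. For any real $3$-dimensional subspace $W\subset\mathbb{C}^n$, the orbit $\mathrm{SU}(n)\cdot W$ has the transitivity property. Consequently, for $p\ge3$, any nonempty compact $\mathrm{U}(n)$-invariant subset $\mathbb{G}\subset G^{\mathbb{R}}(p,\mathbb{C}^n)$ has the transitivity property.
   Context: $G^{\mathbb{R}}(p,\mathbb{C}^n)$ is the Grassmannian of real $p$-dimensional subspaces of $\mathbb{C}^n=\mathbb{R}^{2n}$. A set $\mathbb{G}$ of real planes in $\mathbb{R}^{2n}$ has the transitivity property if for any two vectors $x,y$ there exist $W_1,\dots,W_k\in\mathbb{G}$ with $x\in W_1$, $y\in W_k$ and $\dim_{\mathbb{R}}(W_i\cap W_{i+1})>0$ for $i=1,\dots,k-1$. *)

theory Defs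
  imports "HOL-Analysis.Analysis"
begin

text \<open>C^n is modelled as complex^'n with CARD('n) = n, regarded as the real
 Euclidean space R^(2n) (real inner product = real part of Hermitian product).
 subspace and dim are the real notions.\<close>

definition conj_transpose :: "complex^'n^'m \<Rightarrow> complex^'m^'n" where
  "conj_transpose A = (\<chi> i j. cnj (A $ j $ i))"

definition unitary_group :: "(complex^'n^'n) set" where
  "unitary_group = {U. U ** conj_transpose U = mat 1 \<and> conj_transpose U ** U = mat 1}"

definition special_unitary_group :: "(complex^'n^'n) set" where
  "special_unitary_group = {U \<in> unitary_group. det U = 1}"

definition act :: "complex^'n^'n \<Rightarrow> (complex^'n) set \<Rightarrow> (complex^'n) set" where
  "act U W = (\<lambda>x. U *v x) ` W"

definition orbit :: "(complex^'n^'n) set \<Rightarrow> (complex^'n) set \<Rightarrow> (complex^'n) set set" where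
  "orbit H W = {act U W | U. U \<in> H}"

definition real_grassmannian :: "nat \<Rightarrow> (complex^'n) set set" where
  "real_grassmannian p = {W. subspace W \<and> dim W = p}"

text \<open>Standard topology on the Grassmannian: W is identified with its orthogonal
 projection (closest-point map), which as a real-linear map is encoded by its
 values on the real basis e_k, i e_k.\<close>
definition proj_coords :: "(complex^'n) set \<Rightarrow> (complex^'n^'n) \<times> (complex^'n^'n)" where
  "proj_coords W = ((\<chi> k. closest_point W (axis k 1)), (\<chi> k. closest_point W (axis k \<i>)))"

definition grassmannian_compact :: "(complex^'n) set set \<Rightarrow> bool" where
  "grassmannian_compact G \<longleftrightarrow> compact (proj_coords ` G)"

definition U_invariant :: "(complex^'n) set set \<Rightarrow> bool" where
  "U_invariant G \<longleftrightarrow> (\<forall>U \<in> unitary_group. \<forall>W \<in> G. act U W \<in> G)"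

definition transitivity_property :: "(complex^'n) set set \<Rightarrow> bool" where
  "transitivity_property G \<longleftrightarrow>
     (\<forall>x y. \<exists>Ws. Ws \<noteq> [] \<and> set Ws \<subseteq> G \<and> x \<in> hd Ws \<and> y \<in> last Ws \<and>
        (\<forall>i. Suc i < length Ws \<longrightarrow> dim (Ws ! i \<inter> Ws ! Suc i) > 0))"

end

theory Submission
  imports Defs
begin


definition hip :: "complex^'n \<Rightarrow> complex^'n \<Rightarrow> complex" where
  "hip x y = (\<Sum>i\<in>UNIV. cnj (x$i) * y$i)"

lemma hip_add_left: "hip (x + y) z = hip x z + hip y z"
  by (simp add: hip_def sum.distrib algebra_simps)
lemma hip_add_right: "hip z (x + y) = hip z x + hip z y"
  by (simp add: hip_def sum.distrib algebra_simps)
lemma hip_diff_left: "hip (x - y) z = hip x z - hip y z"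
  by (simp add: hip_def sum_subtractf algebra_simps)
lemma hip_diff_right: "hip z (x - y) = hip z x - hip z y"
  by (simp add: hip_def sum_subtractf algebra_simps)
lemma hip_smult_left: "hip (c *s x) y = cnj c * hip x y"
  by (simp add: hip_def sum_distrib_left algebra_simps)
lemma hip_smult_right: "hip x (c *s y) = c * hip x y"
  by (simp add: hip_def sum_distrib_left algebra_simps)
lemma hip_scaleR_left: "hip (r *\<^sub>R x) y = of_real r * hip x y"
  unfolding hip_def vector_scaleR_component by (simp add: sum_distrib_left algebra_simps scaleR_conv_of_real)
lemma hip_scaleR_right: "hip x (r *\<^sub>R y) = of_real r * hip x y"
  unfolding hip_def vector_scaleR_component by (simp add: sum_distrib_left algebra_simps scaleR_conv_of_real)
lemma hip_sym: "hip y x = cnj (hip x y)"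
  by (simp add: hip_def mult.commute)
lemma hip_zero_left[simp]: "hip 0 x = 0" and hip_zero_right[simp]: "hip x 0 = 0"
  by (simp_all add: hip_def)

lemma cnj_mult_self: "cnj z * z = of_real ((cmod z)^2)"
  by (metis complex_norm_square mult.commute)

lemma Re_hip: "Re (hip x y) = inner x y"
  by (simp add: hip_def inner_vec_def Re_sum inner_complex_def)

lemma hip_self: "hip x x = of_real ((norm x)^2)"
proof -
  have "hip x x = (\<Sum>i\<in>UNIV. of_real ((cmod (x$i))^2))"
    by (simp add: hip_def cnj_mult_self)
  also have "\<dots> = of_real ((norm x)^2)"
    by (simp add: norm_vec_def L2_set_def sum_nonneg of_real_sum)
  finally show ?thesis .
qed

lemma Im_hip: "Im (hip x y) = inner (\<i> *s x) y"
  by (simp add: hip_def inner_vec_def Im_sum inner_complex_def)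

lemma hip_zero_iff: "hip x y = 0 \<longleftrightarrow> inner x y = 0 \<and> inner (\<i> *s x) y = 0"
  by (metis Im_hip Re_hip complex_eq_iff zero_complex.simps)

lemma hip_axis: "hip (axis k 1) v = v $ k"
proof -
  have "hip (axis k 1) v = (\<Sum>i\<in>UNIV. if i = k then v$i else 0)"
    unfolding hip_def by (rule sum.cong) (auto simp: axis_def)
  then show ?thesis by simp
qed


abbreviation CT where "CT \<equiv> conj_transpose"

lemma CT_CT[simp]: "CT (CT A) = A"
  by (simp add: conj_transpose_def vec_eq_iff)



lemma hip_adj: "hip (A *v x) y = hip x (CT A *v y)"
proof -
  have "hip (A *v x) y = (\<Sum>i\<in>UNIV. \<Sum>j\<in>UNIV. cnj (A$i$j) * cnj (x$j) * y$i)"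
    unfolding hip_def matrix_vector_mult_def by (simp add: sum_distrib_right)
  also have "\<dots> = (\<Sum>j\<in>UNIV. \<Sum>i\<in>UNIV. cnj (A$i$j) * cnj (x$j) * y$i)"
    by (rule sum.swap)
  also have "\<dots> = hip x (CT A *v y)"
    unfolding hip_def matrix_vector_mult_def conj_transpose_def
    by (simp add: sum_distrib_left mult_ac)
  finally show ?thesis .
qed

lemma CT_mult: "CT (A ** B) = CT B ** CT A"
  by (simp add: conj_transpose_def matrix_matrix_mult_def vec_eq_iff mult.commute)

lemma mv_axis: "(A *v axis j 1) $ i = A $ i $ (j::'n::finite)"
proof -
  have "(A *v axis j 1) $ i = (\<Sum>k\<in>UNIV. if k = j then A$i$k else 0)"
    unfolding matrix_vector_mult_def by (simp add: axis_def if_distrib cong: if_cong)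
  then show ?thesis by simp
qed

lemma CTA_A_entry: "(CT A ** A) $ j $ k = hip (A *v axis j 1) (A *v axis k 1)"
  unfolding hip_def mv_axis by (simp add: matrix_matrix_mult_def conj_transpose_def)

lemma hip_axis_axis: "hip (axis j 1) (axis k (1::complex)) = (if j = k then 1 else 0)"
  unfolding hip_axis by (simp add: axis_def)

lemma unitaryI:
  fixes A :: "complex^'n^'n"
  assumes "\<And>x y. hip (A *v x) (A *v y) = hip x y"
  shows "A \<in> unitary_group"
proof -
  have 1: "CT A ** A = mat 1"
    unfolding vec_eq_iff CTA_A_entry assms hip_axis_axis by (simp add: mat_def)
  then have "A ** CT A = mat 1" using matrix_left_right_inverse by blast
  with 1 show ?thesis by (simp add: unitary_group_def)
qed

lemma unitary_hip:
  assumes "A \<in> unitary_group"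
  shows "hip (A *v x) (A *v y) = hip x y"
  using assms by (simp add: hip_adj matrix_vector_mul_assoc unitary_group_def)

lemma unitary_CT: "A \<in> unitary_group \<Longrightarrow> CT A \<in> unitary_group"
  by (simp add: unitary_group_def)

lemma unitary_mult: "A \<in> unitary_group \<Longrightarrow> B \<in> unitary_group \<Longrightarrow> A ** B \<in> unitary_group"
  by (rule unitaryI) (simp add: matrix_vector_mul_assoc[symmetric] unitary_hip)

lemma unitary_RRstar: "A \<in> unitary_group \<Longrightarrow> A *v (CT A *v x) = x"
  by (simp add: unitary_group_def matrix_vector_mul_assoc)

lemma det_CT: "det (CT A) = cnj (det (A::complex^'n^'n))"
proof -
  have "CT A = transpose (\<chi> i j. cnj (A$i$j))"
    by (simp add: conj_transpose_def transpose_def vec_eq_iff)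
  then have "det (CT A) = det (\<chi> i j. cnj (A$i$j))" by simp
  also have "\<dots> = cnj (det A)"
    by (simp add: det_def)
  finally show ?thesis .
qed

lemma unitary_det: "A \<in> unitary_group \<Longrightarrow> cnj (det A) * det A = 1"
proof -
  assume "A \<in> unitary_group"
  then have "CT A ** A = mat 1" by (simp add: unitary_group_def)
  then have "det (CT A ** A) = 1" by simp
  then show ?thesis by (simp only: det_mul det_CT)
qed




definition rk :: "complex \<Rightarrow> complex^'n \<Rightarrow> complex^'n^'n" where
  "rk a u = (\<chi> i j. (if i = j then 1 else 0) + a * u$i * cnj (u$j))"

lemma rk_apply: "rk a u *v x = x + (a * hip u x) *s u"
proof -
  have "(rk a u *v x) $ i = x $ i + a * hip u x * u $ i" for i
  proof -
    have "(rk a u *v x) $ i = (\<Sum>j\<in>UNIV. (if i = j then x$j else 0) + a * u$i * (cnj (u$j) * x$j))"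
      unfolding rk_def matrix_vector_mult_def vec_lambda_beta by (rule sum.cong) (auto simp: algebra_simps)
    also have "\<dots> = x$i + a * u$i * hip u x"
      by (simp add: sum.distrib hip_def sum_distrib_left)
    finally show ?thesis by (simp add: mult_ac)
  qed
  then show ?thesis by (simp add: vec_eq_iff)
qed

lemma rk_unitary:
  fixes u :: "complex^'n"
  assumes "a + cnj a + a * cnj a * hip u u = 0"
  shows "rk a u \<in> unitary_group"
proof (rule unitaryI)
  fix x y :: "complex^'n"
  have hxu: "hip x u = cnj (hip u x)" by (simp add: hip_sym[of x u])
  have "hip (rk a u *v x) (rk a u *v y)
     = hip x y + a * hip u y * hip x u + cnj (a * hip u x) * hip u y + cnj (a * hip u x) * (a * hip u y) * hip u u"
    unfolding rk_apply
    by (simp add: hip_add_left hip_add_right hip_smult_left hip_smult_right algebra_simps)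
  also have "\<dots> = hip x y + cnj (hip u x) * hip u y * (a + cnj a + a * cnj a * hip u u)"
    by (simp add: hxu algebra_simps)
  also have "\<dots> = hip x y" using assms by simp
  finally show "hip (rk a u *v x) (rk a u *v y) = hip x y" .
qed

lemma rk_fix: "hip u z = 0 \<Longrightarrow> rk a u *v z = z"
  by (simp add: rk_apply)


lemma exists_unitary_map:
  fixes p q :: "complex^'n"
  assumes pp: "hip p p = 1" and qq: "hip q q = 1"
  obtains V where "V \<in> unitary_group" "V *v p = q"
    "\<And>z. hip p z = 0 \<Longrightarrow> hip q z = 0 \<Longrightarrow> V *v z = z"
proof -
  define t where "t = hip q p"
  define c where "c = (if t = 0 then 1 else cnj t / of_real (cmod t))"
  have cc: "cnj c * c = 1"
  proof (cases "t = 0")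
    case False
    then have "cnj t * t = of_real ((cmod t)^2)" by (simp add: cnj_mult_self)
    with False show ?thesis
      by (simp add: c_def power2_eq_square field_simps)
  qed (simp add: c_def)
  have ct: "cnj (c * t) = c * t"
  proof (cases "t = 0")
    case False
    have tt: "t * cnj t = of_real (cmod t) * of_real (cmod t)"
      using complex_norm_square[of t] by (simp add: power2_eq_square)
    then have "c * t = of_real (cmod t)"
      using False by (simp add: c_def field_simps mult.commute)
    then show ?thesis by simp
  qed (simp add: c_def)
  define P where "P = rk (c - 1) p"
  have P_u: "P \<in> unitary_group" unfolding P_def
  proof (rule rk_unitary)
    have "(c - 1) + cnj (c - 1) + (c-1) * cnj (c-1) * hip p p = cnj c * c - 1"
      by (simp add: pp algebra_simps)
    then show "(c - 1) + cnj (c - 1) + (c-1) * cnj (c-1) * hip p p = 0" by (simp add: cc)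
  qed
  have P_p: "P *v p = c *s p"
    by (simp add: P_def rk_apply pp vector_sadd_rdistrib[symmetric] algebra_simps)
  have P_z: "hip p z = 0 \<Longrightarrow> P *v z = z" for z by (simp add: P_def rk_fix)
  define u where "u = c *s p - q"
  show ?thesis
  proof (cases "u = 0")
    case True
    show ?thesis
    proof (rule that[OF P_u])
      show "P *v p = q" using True by (simp add: P_p u_def)
    qed (simp add: P_z)
  next
    case False
    define s where "s = hip u u"
    have s_real: "cnj s = s" by (simp add: s_def hip_self)
    have s_nz: "s \<noteq> 0" using False by (simp add: s_def hip_self)
    have s_eq: "s = 2 - 2 * (c * t)"
    proof -
      have "s = cnj c * c * hip p p - cnj c * hip p q - c * hip q p + hip q q"
        by (simp add: s_def u_def hip_diff_left hip_diff_right hip_smult_left hip_smult_right algebra_simps)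
      also have "\<dots> = 2 - c * t - cnj (c * t)"
        by (simp add: cc pp qq t_def hip_sym[of p q])
      finally show ?thesis using ct by simp
    qed
    have ucp: "hip u (c *s p) = 1 - c * t"
      by (simp add: u_def hip_diff_left hip_smult_left hip_smult_right pp t_def algebra_simps cc[simplified mult.commute])
    define H where "H = rk (-2 / s) u"
    have H_u: "H \<in> unitary_group" unfolding H_def
    proof (rule rk_unitary)
      show "- 2 / s + cnj (- 2 / s) + - 2 / s * cnj (- 2 / s) * hip u u = 0"
        using s_nz by (simp add: s_real s_def[symmetric] field_simps)
    qed
    have H_cp: "H *v (c *s p) = q"
    proof -
      have "(-2 / s) * hip u (c *s p) = -1"
        using s_nz by (simp add: ucp s_eq field_simps)
      then show ?thesis by (simp add: H_def rk_apply u_def)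
    qed
    show ?thesis
    proof (rule that[of "H ** P"])
      show "H ** P \<in> unitary_group" by (rule unitary_mult[OF H_u P_u])
      show "(H ** P) *v p = q" by (simp add: matrix_vector_mul_assoc[symmetric] P_p H_cp)
      fix z assume z1: "hip p z = 0" and z2: "hip q z = 0"
      have "hip u z = 0" by (simp add: u_def hip_diff_left hip_smult_left z1 z2)
      then show "(H ** P) *v z = z"
        by (simp add: matrix_vector_mul_assoc[symmetric] P_z[OF z1] H_def rk_fix)
    qed
  qed
qed



lemma orth_exists:
  fixes a b :: "complex^'n"
  assumes "CARD('n) \<ge> 3"
  obtains e where "hip e e = 1" "hip a e = 0" "hip b e = 0"
proof -
  let ?S = "{a, \<i> *s a, b, \<i> *s b}"
  have "dim ?S \<le> card ?S" by (rule dim_le_card') simp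
  also have "\<dots> \<le> 4" using card_length[of "[a, \<i> *s a, b, \<i> *s b]"] by simp
  also have "4 < DIM(complex^'n)" using assms by simp
  finally obtain x where x: "x \<noteq> 0" "\<And>y. y \<in> span ?S \<Longrightarrow> orthogonal x y"
    using orthogonal_to_subspace_exists by blast
  have o: "inner y x = 0" if "y \<in> ?S" for y
    using x(2)[OF span_base[OF that]] by (simp add: orthogonal_def inner_commute)
  have ha: "hip a x = 0" using o by (simp add: hip_zero_iff)
  have hb: "hip b x = 0" using o by (simp add: hip_zero_iff)
  define e where "e = (1 / norm x) *\<^sub>R x"
  show ?thesis
  proof (rule that[of e])
    show "hip e e = 1" using x(1) by (simp add: e_def hip_self)
    show "hip a e = 0" by (simp add: e_def hip_scaleR_right ha)
    show "hip b e = 0" by (simp add: e_def hip_scaleR_right hb)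
  qed
qed


definition dg :: "'n \<Rightarrow> complex \<Rightarrow> complex^'n^'n" where
  "dg k l = (\<chi> i j. if i = j then (if i = k then l else 1) else 0)"

lemma dg_apply: "(dg k l *v x) $ i = (if i = k then l else 1) * x $ i"
proof -
  have "(dg k l *v x) $ i = (\<Sum>j\<in>UNIV. if j = i then (if i = k then l else 1) * x $ i else 0)"
    unfolding dg_def matrix_vector_mult_def vec_lambda_beta by (rule sum.cong) auto
  then show ?thesis by simp
qed

lemma dg_unitary: "cnj l * l = 1 \<Longrightarrow> dg (k::'n::finite) l \<in> unitary_group"
proof (rule unitaryI)
  fix x y :: "complex^'n"
  assume l: "cnj l * l = 1"
  have "hip (dg k l *v x) (dg k l *v y) = (\<Sum>i\<in>UNIV. cnj (x$i) * y$i)"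
    unfolding hip_def dg_apply
  proof (rule sum.cong)
    fix i show "cnj ((if i = k then l else 1) * x $ i) * ((if i = k then l else 1) * y $ i) = cnj (x $ i) * y $ i"
      using l by (cases "i = k") (simp_all add: algebra_simps)
  qed simp
  then show "hip (dg k l *v x) (dg k l *v y) = hip x y" by (simp add: hip_def)
qed

lemma dg_det: "det (dg k l) = l"
proof -
  have "det (dg k l) = (\<Prod>i\<in>UNIV. if i = k then l else 1)"
    by (subst det_diagonal) (simp_all add: dg_def)
  also have "\<dots> = l" by (simp add: prod.If_cases)
  finally show ?thesis .
qed

lemma dg_fix: "x $ k = 0 \<Longrightarrow> dg k l *v x = x"
  by (simp add: vec_eq_iff dg_apply)

lemma pair_map:
  fixes w1 w2 a b :: "complex^'n"
  assumes n3: "CARD('n) \<ge> 3"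
    and w: "hip w1 w1 = 1" "hip w2 w2 = 1" "hip w1 w2 = 0"
    and ab: "hip a a = 1" "hip b b = 1" "hip a b = 0"
  obtains U where "U \<in> special_unitary_group" "U *v w1 = a" "U *v w2 = b"
proof -
  obtain V1 where V1: "V1 \<in> unitary_group" "V1 *v w1 = a"
    using exists_unitary_map[OF w(1) ab(1)] by blast
  define w2' where "w2' = V1 *v w2"
  have w2'w2': "hip w2' w2' = 1" using unitary_hip[OF V1(1)] w by (simp add: w2'_def)
  have aw2': "hip a w2' = 0" using unitary_hip[OF V1(1), of w1 w2] V1(2) w by (simp add: w2'_def)
  obtain V2 where V2: "V2 \<in> unitary_group" "V2 *v w2' = b"
    "\<And>z. hip w2' z = 0 \<Longrightarrow> hip b z = 0 \<Longrightarrow> V2 *v z = z"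
    using exists_unitary_map[OF w2'w2' ab(2)] by blast
  have V2a: "V2 *v a = a"
    by (rule V2(3)) (use aw2' ab(3) in \<open>simp_all add: hip_sym[of w2' a] hip_sym[of b a]\<close>)
  define V where "V = V2 ** V1"
  have Vu: "V \<in> unitary_group" unfolding V_def by (rule unitary_mult[OF V2(1) V1(1)])
  have Vw1: "V *v w1 = a" by (simp add: V_def matrix_vector_mul_assoc[symmetric] V1(2) V2a)
  have Vw2: "V *v w2 = b" by (simp add: V_def matrix_vector_mul_assoc[symmetric] V2(2) w2'_def[symmetric])
  define d where "d = det V"
  have dd: "cnj d * d = 1" using unitary_det[OF Vu] by (simp add: d_def)
  obtain e where e: "hip e e = 1" "hip a e = 0" "hip b e = 0"
    using orth_exists[OF n3] by blast
  obtain k :: 'n where True by blast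
  have kk: "hip (axis k 1) (axis k (1::complex)) = 1" by (simp add: hip_axis_axis)
  obtain R where R: "R \<in> unitary_group" "R *v axis k 1 = e"
    using exists_unitary_map[OF kk e(1)] by blast
  define D where "D = dg k (cnj d)"
  have Du: "D \<in> unitary_group" unfolding D_def by (rule dg_unitary) (use dd in \<open>simp add: mult.commute\<close>)
  define Q where "Q = R ** D ** CT R"
  have Qu: "Q \<in> unitary_group" unfolding Q_def
    by (intro unitary_mult unitary_CT R(1) Du)
  have Qfix: "Q *v y = y" if "hip e y = 0" for y
  proof -
    have "(CT R *v y) $ k = 0"
      using that by (simp add: hip_axis[symmetric] hip_adj[symmetric] R(2))
    then have "D *v (CT R *v y) = CT R *v y" by (simp add: D_def dg_fix)
    then show ?thesis
      by (simp add: Q_def matrix_vector_mul_assoc[symmetric] unitary_RRstar[OF R(1)])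
  qed
  define U where "U = Q ** V"
  show ?thesis
  proof (rule that[of U])
    have "det U = (cnj (det R) * det R) * (cnj d * d)"
      by (simp add: U_def Q_def det_mul det_CT D_def dg_det d_def mult_ac)
    then have "det U = 1" using unitary_det[OF R(1)] dd by simp
    moreover have "U \<in> unitary_group" unfolding U_def by (rule unitary_mult[OF Qu Vu])
    ultimately show "U \<in> special_unitary_group" by (simp add: special_unitary_group_def)
    show "U *v w1 = a"
      using Qfix[of a] e(2) by (simp add: U_def matrix_vector_mul_assoc[symmetric] Vw1 hip_sym[of e a])
    show "U *v w2 = b"
      using Qfix[of b] e(3) by (simp add: U_def matrix_vector_mul_assoc[symmetric] Vw2 hip_sym[of e b])
  qed
qed



lemma w_pair:
  fixes W :: "(complex^'n) set"
  assumes W: "subspace W" and d: "dim W \<ge> 3"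
  obtains w1 w2 where "w1 \<in> W" "w2 \<in> W" "hip w1 w1 = 1" "hip w2 w2 = 1" "hip w1 w2 = 0"
proof -
  obtain B where B: "B \<subseteq> W" "pairwise orthogonal B" "\<And>x. x \<in> B \<Longrightarrow> norm x = 1" "card B = dim W"
    using orthonormal_basis_subspace[OF W] by metis
  obtain T where T: "T \<subseteq> B" "card T = 3" using d B(4) obtain_subset_with_card_n by metis
  then obtain u1 u2 u3 where T3: "T = {u1,u2,u3}" "u1 \<noteq> u2" "u2 \<noteq> u3" "u1 \<noteq> u3"
    by (auto simp: card_3_iff)
  have inB: "u1 \<in> B" "u2 \<in> B" "u3 \<in> B" using T T3 by auto
  have o12: "inner u1 u2 = 0" and o13: "inner u1 u3 = 0" and o23: "inner u2 u3 = 0"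
    using B(2) inB T3 by (auto simp: pairwise_def orthogonal_def)
  have n2: "inner u2 u2 = 1" and n3: "inner u3 u3 = 1" and n1: "norm u1 = 1"
    using B(3) inB by (auto simp: norm_eq_1)
  have h11: "hip u1 u1 = 1" using n1 by (simp add: hip_self)
  have W1: "u1 \<in> W" "u2 \<in> W" "u3 \<in> W" using inB B(1) by auto
  define \<alpha> where "\<alpha> = inner (\<i> *s u1) u3"
  define \<beta> where "\<beta> = - inner (\<i> *s u1) u2"
  show ?thesis
  proof (cases "\<alpha> = 0 \<and> \<beta> = 0")
    case True
    show ?thesis
    proof (rule that[OF W1(1) W1(2) h11])
      show "hip u2 u2 = 1" using n2 by (simp add: hip_self power2_norm_eq_inner)
      show "hip u1 u2 = 0" using True o12 by (simp add: hip_zero_iff \<beta>_def)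
    qed
  next
    case False
    define v where "v = \<alpha> *\<^sub>R u2 + \<beta> *\<^sub>R u3"
    have "inner v u2 = \<alpha>" "inner v u3 = \<beta>"
      using n2 n3 o23 by (simp_all add: v_def inner_add_left inner_commute[of u3 u2])
    then have vnz: "v \<noteq> 0" using False by auto
    have vW: "v \<in> W" unfolding v_def using W W1 by (intro subspace_add subspace_scale) auto
    have hv: "hip u1 v = 0"
      unfolding hip_zero_iff using o12 o13
      by (simp add: v_def inner_add_right inner_diff_right \<alpha>_def \<beta>_def algebra_simps)
    define w2 where "w2 = (1 / norm v) *\<^sub>R v"
    show ?thesis
    proof (rule that[OF W1(1) _ h11])
      show "w2 \<in> W" unfolding w2_def using W vW by (intro subspace_scale) auto
      show "hip w2 w2 = 1" using vnz by (simp add: w2_def hip_self)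
      show "hip u1 w2 = 0" by (simp add: w2_def hip_scaleR_right hv)
    qed
  qed
qed

lemma mv_scaleR: "A *v (r *\<^sub>R v) = r *\<^sub>R (A *v (v::complex^'n))"
  unfolding matrix_vector_mult_def by (simp add: vec_eq_iff scaleR_sum_right vector_scaleR_component)

lemma unit_orth:
  fixes a z :: "complex^'n"
  assumes n3: "CARD('n) \<ge> 3" and az: "hip a z = 0"
  obtains a' where "hip a' a' = 1" "hip a' z = 0" "a = norm a *\<^sub>R a'"
proof (cases "a = 0")
  case True
  obtain e where e: "hip e e = 1" "hip z e = 0" "hip z e = 0" using orth_exists[OF n3] by blast
  show ?thesis
    by (rule that[of e]) (use e True in \<open>simp_all add: hip_sym[of e z]\<close>)
next
  case False
  show ?thesis
  proof (rule that[of "(1 / norm a) *\<^sub>R a"])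
    show "hip ((1 / norm a) *\<^sub>R a) ((1 / norm a) *\<^sub>R a) = 1" using False by (simp add: hip_self)
    show "hip ((1 / norm a) *\<^sub>R a) z = 0" by (simp add: hip_scaleR_left az)
    show "a = norm a *\<^sub>R (1 / norm a) *\<^sub>R a" using False by simp
  qed
qed

lemma chain:
  fixes W :: "(complex^'n) set" and G
  assumes n3: "CARD('n) \<ge> 3" and W: "subspace W" "dim W \<ge> 3"
    and G: "\<And>U. U \<in> special_unitary_group \<Longrightarrow> act U W \<in> G"
  shows "transitivity_property G"
  unfolding transitivity_property_def
proof (intro allI)
  fix x y :: "complex^'n"
  obtain w1 w2 where w: "w1 \<in> W" "w2 \<in> W" "hip w1 w1 = 1" "hip w2 w2 = 1" "hip w1 w2 = 0"
    using w_pair[OF W] by blast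
  obtain z where z: "hip z z = 1" "hip x z = 0" "hip y z = 0" using orth_exists[OF n3] by blast
  have zW: "z \<in> act U W" if "U *v w2 = z" for U
    unfolding act_def using w(2) that by blast
  have aW: "a \<in> act U W" if "U *v w1 = a'" "a = norm a *\<^sub>R a'" for U a a'
  proof -
    have "norm a *\<^sub>R w1 \<in> W" using W(1) w(1) by (simp add: subspace_scale)
    moreover have "U *v (norm a *\<^sub>R w1) = a" using that by (simp add: mv_scaleR)
    ultimately show ?thesis unfolding act_def by (auto intro!: image_eqI[where x="norm a *\<^sub>R w1"])
  qed
  obtain x' where x': "hip x' x' = 1" "hip x' z = 0" "x = norm x *\<^sub>R x'"
    using unit_orth[OF n3 z(2)] by blast
  obtain y' where y': "hip y' y' = 1" "hip y' z = 0" "y = norm y *\<^sub>R y'"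
    using unit_orth[OF n3 z(3)] by blast
  obtain U1 where U1: "U1 \<in> special_unitary_group" "U1 *v w1 = x'" "U1 *v w2 = z"
    using pair_map[OF n3 w(3,4,5) x'(1) z(1) x'(2)] by blast
  obtain U2 where U2: "U2 \<in> special_unitary_group" "U2 *v w1 = y'" "U2 *v w2 = z"
    using pair_map[OF n3 w(3,4,5) y'(1) z(1) y'(2)] by blast
  have znz: "z \<noteq> 0" using z(1) by auto
  have "z \<in> act U1 W \<inter> act U2 W" using zW U1(3) U2(3) by blast
  then have "dim (act U1 W \<inter> act U2 W) > 0" using znz
    by (metis dim_eq_0 gr0I singletonD subsetD)
  then show "\<exists>Ws. Ws \<noteq> [] \<and> set Ws \<subseteq> G \<and> x \<in> hd Ws \<and> y \<in> last Ws \<and>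
        (\<forall>i. Suc i < length Ws \<longrightarrow> dim (Ws ! i \<inter> Ws ! Suc i) > 0)"
    using G[OF U1(1)] G[OF U2(1)] aW[OF U1(2) x'(3)] aW[OF U2(2) y'(3)]
    by (intro exI[of _ "[act U1 W, act U2 W]"]) (auto simp: less_Suc_eq)
qed

theorem corollary11p5:
  assumes "CARD('n::finite) \<ge> 3"
  shows "(\<forall>W :: (complex^'n) set. subspace W \<and> dim W = 3 \<longrightarrow>
            transitivity_property (orbit special_unitary_group W))
       \<and> (\<forall>p (G :: (complex^'n) set set). p \<ge> 3 \<and> G \<subseteq> real_grassmannian p \<and> G \<noteq> {}
            \<and> grassmannian_compact G \<and> U_invariant G \<longrightarrow> transitivity_property G)"
proof (intro conjI allI impI)
  fix W :: "(complex^'n) set"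
  assume "subspace W \<and> dim W = 3"
  then show "transitivity_property (orbit special_unitary_group W)"
    by (intro chain[OF assms]) (auto simp: orbit_def)
next
  fix p and G :: "(complex^'n) set set"
  assume h: "p \<ge> 3 \<and> G \<subseteq> real_grassmannian p \<and> G \<noteq> {} \<and> grassmannian_compact G \<and> U_invariant G"
  then obtain W where W: "W \<in> G" by blast
  then have "subspace W" "dim W \<ge> 3" using h by (auto simp: real_grassmannian_def)
  then show "transitivity_property G"
  proof (rule chain[OF assms])
    fix U :: "complex^'n^'n" assume "U \<in> special_unitary_group"
    then show "act U W \<in> G" using h W by (auto simp: U_invariant_def special_unitary_group_def)
  qed
qed


end
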